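(* Let $d\ge 1$, let $W\in\mathbb{R}^{d\times d}$ be a weight matrix, let $x\in\mathbb{R}^d$ be an input, and let $M\in\{0,1\}^{d\times d}$ be the (unknown) binary mask actually used, so that the observed intermediate output is $y=(W\odot M)x$. Suppose an attacker draws a guessed mask $\hat M\in\{0,1\}^{d\times d}$ from a probability distribution $P$ on $\{0,1\}^{d\times d}$ such that $W\odot \hat M$ is invertible for every $\hat M$ with $P(\hat M)>0$, and reconstructs the input as $\hat x=(W\odot\hat M)^{-1}y$. Then $$\mathbb{E}_{\hat M\sim P}\,\|x-\hat x\|\;\ge\;\sum_{\hat M}P(\hat M)\,\frac{\sigma_{\min}\bigl(W\odot(\hat M-M)\bigr)}{\sigma_{\max}\bigl(W\odot \hat M\bigr)}\,\|x\|,$$ where the sum ranges over the support of $P$.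
   Context: $\odot$ denotes the entrywise (Hadamard) product of matrices; $\|\cdot\|$ is the Euclidean norm on $\mathbb{R}^d$; $\sigma_{\min}(A)$ and $\sigma_{\max}(A)$ denote the smallest and largest singular values of a square matrix $A$. The setting models a client-side layer in split learning whose weights are masked by a randomly sampled binary mask; the attacker knows $W$ and $y$ but not $M$. *)

theory Defs
  imports "HOL-Analysis.Analysis" "HOL-Probability.Probability"
begin

definition hadamard :: "real^'n^'n \<Rightarrow> real^'n^'n \<Rightarrow> real^'n^'n" (infixl "\<odot>" 70) where
  "A \<odot> B = (\<chi> i j. A $ i $ j * B $ i $ j)"

definition binary_mask :: "real^'n^'n \<Rightarrow> bool" where
  "binary_mask M \<longleftrightarrow> (\<forall>i j. M $ i $ j = 0 \<or> M $ i $ j = 1)"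

definition real_eigenvalues :: "real^'n^'n \<Rightarrow> real set" where
  "real_eigenvalues A = {c. \<exists>v. v \<noteq> 0 \<and> A *v v = c *\<^sub>R v}"

definition singular_values :: "real^'n^'n \<Rightarrow> real set" where
  "singular_values A = sqrt ` real_eigenvalues (transpose A ** A)"

definition sigma_min :: "real^'n^'n \<Rightarrow> real" where
  "sigma_min A = Min (singular_values A)"

definition sigma_max :: "real^'n^'n \<Rightarrow> real" where
  "sigma_max A = Max (singular_values A)"

end

theory Submission
  imports Defs
begin

lemma quad_aux:
  fixes q b :: real
  assumes "q \<ge> 0"
  shows "2 * (- b * (1 / (q+1))) * b + (- b * (1 / (q+1)))^2 * q = b^2 * (- (q + 2) * (1 / (q+1))^2)
     \<and> - (q + 2) * (1 / (q+1))^2 < 0"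
proof -
  define s where "s = 1 / (q+1)"
  have d: "s * (q + 1) = 1" "s > 0" using assms unfolding s_def by simp_all
  have "2 * (- b * s) * b + (- b * s)^2 * q = b^2 * (s^2 * q - 2 * s * (s * (q+1)))" using d by (simp add: algebra_simps power2_eq_square)
  also have "\<dots> = b^2 * (- (q + 2) * s^2)" by (simp add: algebra_simps power2_eq_square)
  finally show ?thesis using d assms unfolding s_def[symmetric] by (simp add: mult_neg_pos)
qed

lemma quad_zero_imp:
  fixes T :: "real^'n^'n"
  assumes sym: "transpose T = T"
    and psd: "\<And>v. v \<bullet> (T *v v) \<ge> 0"
    and z: "u \<bullet> (T *v u) = 0"
  shows "T *v u = 0"
proof -
  define w where "w = T *v u"
  define b where "b = w \<bullet> w"
  define q where "q = w \<bullet> (T *v w)"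
  have q0: "q \<ge> 0" using psd unfolding q_def by simp
  have symm: "a \<bullet> (T *v c) = c \<bullet> (T *v a)" for a c
  proof -
    have "a \<bullet> (T *v c) = (a v* T) \<bullet> c" by (simp add: dot_lmul_matrix)
    also have "\<dots> = (transpose T *v a) \<bullet> c" by simp
    also have "\<dots> = c \<bullet> (T *v a)" using sym by (simp add: inner_commute)
    finally show ?thesis .
  qed
  have expand: "(u + t *\<^sub>R w) \<bullet> (T *v (u + t *\<^sub>R w)) = 2 * t * b + t^2 * q" for t
  proof -
    have "(u + t *\<^sub>R w) \<bullet> (T *v (u + t *\<^sub>R w))
        = u \<bullet> (T *v u) + t * (u \<bullet> (T *v w)) + t * (w \<bullet> (T *v u)) + t * t * (w \<bullet> (T *v w))"
      by (simp add: matrix_vector_right_distrib matrix_vector_mult_scaleR inner_add_left inner_add_right algebra_simps)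
    also have "\<dots> = 2 * t * b + t^2 * q"
      using z symm[of u w] unfolding b_def q_def w_def by (simp add: power2_eq_square)
    finally show ?thesis .
  qed
  define t where "t = - b * (1 / (q + 1))"
  have "0 \<le> 2 * t * b + t^2 * q" using psd[of "u + t *\<^sub>R w"] expand[of t] by simp
  with quad_aux[OF q0, of b] have "0 \<le> b^2 * (- (q + 2) * (1 / (q+1))^2)" and neg: "- (q + 2) * (1 / (q+1))^2 < 0"
    unfolding t_def by auto
  hence "b^2 \<le> 0" by (smt (verit) mult_pos_neg zero_le_power2)
  hence "b = 0" by simp
  thus ?thesis unfolding b_def w_def by simp
qed

lemma max_eigen:
  fixes S :: "real^'n^'n"
  assumes sym: "transpose S = S"
  shows "\<exists>u c. u \<noteq> 0 \<and> S *v u = c *\<^sub>R u \<and> (\<forall>v. v \<bullet> (S *v v) \<le> c * (v \<bullet> v))"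
proof -
  have cont: "continuous_on (sphere 0 1) (\<lambda>v::real^'n. v \<bullet> (S *v v))"
    by (intro continuous_intros linear_continuous_on matrix_vector_mul_linear)
  have ne: "sphere (0::real^'n) 1 \<noteq> {}"
  proof -
    obtain i :: 'n where True by simp
    have "norm (axis i (1::real)) = 1" by simp
    thus ?thesis by auto
  qed
  obtain u where u: "u \<in> sphere 0 1" and umax: "\<And>v. v \<in> sphere 0 1 \<Longrightarrow> v \<bullet> (S *v v) \<le> u \<bullet> (S *v u)"
    using continuous_attains_sup[OF compact_sphere ne cont] by blast
  define c where "c = u \<bullet> (S *v u)"
  have nu: "norm u = 1" using u by simp
  have uu: "u \<bullet> u = 1" using nu by (simp add: norm_eq_1)
  have bound: "v \<bullet> (S *v v) \<le> c * (v \<bullet> v)" for v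
  proof (cases "v = 0")
    case True thus ?thesis by simp
  next
    case False
    define v' where "v' = (1 / norm v) *\<^sub>R v"
    have "v' \<in> sphere 0 1" unfolding v'_def using False by simp
    hence "v' \<bullet> (S *v v') \<le> c" using umax c_def by simp
    moreover have "v' \<bullet> (S *v v') = (v \<bullet> (S *v v)) / (norm v)^2"
      unfolding v'_def by (simp add: matrix_vector_mult_scaleR power2_eq_square)
    moreover have "v \<bullet> v = (norm v)^2" by (simp add: power2_norm_eq_inner)
    moreover have "(norm v)^2 > 0" using False by simp
    ultimately show ?thesis by (simp add: divide_le_eq mult.commute)
  qed
  define T where "T = c *\<^sub>R mat 1 - S"
  have Tv: "T *v v = c *\<^sub>R v - S *v v" for v
    unfolding T_def by (simp add: matrix_vector_mult_diff_rdistrib) (metis matrix_vector_mul_lid scaleR_matrix_vector_assoc)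
  have symT: "transpose T = T" unfolding T_def using sym
    by (simp add: transpose_def vec_eq_iff mat_def)
  have "T *v u = 0"
  proof (rule quad_zero_imp[OF symT])
    fix v show "0 \<le> v \<bullet> (T *v v)" using bound[of v] by (simp add: Tv inner_diff_right)
  next
    show "u \<bullet> (T *v u) = 0" using uu by (simp add: Tv inner_diff_right c_def)
  qed
  hence "S *v u = c *\<^sub>R u" by (simp add: Tv)
  moreover have "u \<noteq> 0" using nu by auto
  ultimately show ?thesis using bound by blast
qed

lemma sym_swap:
  fixes S :: "real^'n^'n"
  assumes sym: "transpose S = S"
  shows "a \<bullet> (S *v c) = c \<bullet> (S *v a)"
proof -
  have "a \<bullet> (S *v c) = (a v* S) \<bullet> c" by (simp add: dot_lmul_matrix)
  also have "\<dots> = (transpose S *v a) \<bullet> c" by simp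
  also have "\<dots> = c \<bullet> (S *v a)" using sym by (simp add: inner_commute)
  finally show ?thesis .
qed

lemma eig_finite:
  fixes S :: "real^'n^'n"
  assumes sym: "transpose S = S"
  shows "finite (real_eigenvalues S)"
proof -
  define E where "E = real_eigenvalues S"
  define e where "e c = (SOME v. v \<noteq> 0 \<and> S *v v = c *\<^sub>R v)" for c
  have e: "e c \<noteq> 0 \<and> S *v e c = c *\<^sub>R e c" if "c \<in> E" for c
  proof -
    have "\<exists>v. v \<noteq> 0 \<and> S *v v = c *\<^sub>R v" using that unfolding E_def real_eigenvalues_def by simp
    then show ?thesis unfolding e_def by (rule someI_ex)
  qed
  have inj: "inj_on e E"
  proof (rule inj_onI)
    fix c c' assume cc: "c \<in> E" "c' \<in> E" "e c = e c'"
    have "c *\<^sub>R e c = S *v e c" using e[OF cc(1)] by simp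
    also have "\<dots> = S *v e c'" using cc(3) by simp
    also have "\<dots> = c' *\<^sub>R e c'" using e[OF cc(2)] by simp
    also have "\<dots> = c' *\<^sub>R e c" using cc(3) by simp
    finally have "(c - c') *\<^sub>R e c = 0" by (simp add: scaleR_diff_left)
    thus "c = c'" using e[OF cc(1)] by simp
  qed
  have po: "pairwise orthogonal (e ` E)"
  proof (rule pairwiseI)
    fix x y assume xy: "x \<in> e ` E" "y \<in> e ` E" "x \<noteq> y"
    then obtain c c' where cc: "c \<in> E" "c' \<in> E" "x = e c" "y = e c'" by blast
    hence ne: "c \<noteq> c'" using xy(3) by blast
    have ex: "S *v x = c *\<^sub>R x" using e[OF cc(1)] cc(3) by simp
    have ey: "S *v y = c' *\<^sub>R y" using e[OF cc(2)] cc(4) by simp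
    have "c' * (x \<bullet> y) = x \<bullet> (S *v y)" using ey by simp
    also have "\<dots> = y \<bullet> (S *v x)" by (rule sym_swap[OF sym])
    also have "\<dots> = c * (x \<bullet> y)" using ex by (simp add: inner_commute)
    finally have "(c - c') * (x \<bullet> y) = 0" by (auto simp: algebra_simps)
    thus "orthogonal x y" using ne by (simp add: orthogonal_def)
  qed
  have "0 \<notin> e ` E" using e by auto
  with po have "independent (e ` E)" by (rule pairwise_orthogonal_independent)
  hence "finite (e ` E)" by (rule finiteI_independent)
  hence "finite E" using inj by (rule finite_imageD)
  thus ?thesis unfolding E_def .
qed

lemma ata_props:
  fixes A :: "real^'n^'n"
  shows "transpose (transpose A ** A) = transpose A ** A"
    and "v \<bullet> ((transpose A ** A) *v v) = (norm (A *v v))^2"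
proof -
  show "transpose (transpose A ** A) = transpose A ** A"
    by (simp add: matrix_transpose_mul)
  have "v \<bullet> ((transpose A ** A) *v v) = v \<bullet> (transpose A *v (A *v v))"
    by (simp add: matrix_vector_mul_assoc)
  also have "\<dots> = (v v* transpose A) \<bullet> (A *v v)" by (simp only: dot_lmul_matrix)
  also have "\<dots> = (A *v v) \<bullet> (A *v v)"
    by (metis transpose_matrix_vector transpose_transpose)
  finally show "v \<bullet> ((transpose A ** A) *v v) = (norm (A *v v))^2"
    by (simp add: power2_norm_eq_inner)
qed

lemma eig_nonneg:
  fixes A :: "real^'n^'n"
  assumes "c \<in> real_eigenvalues (transpose A ** A)"
  shows "c \<ge> 0"
proof -
  obtain v where v: "v \<noteq> 0" "(transpose A ** A) *v v = c *\<^sub>R v"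
    using assms unfolding real_eigenvalues_def by auto
  have "c * (v \<bullet> v) = (norm (A *v v))^2" using ata_props(2)[of v A] v by simp
  moreover have "v \<bullet> v > 0" using v by simp
  ultimately show ?thesis by (metis zero_le_power2 zero_le_mult_iff linorder_not_le)
qed

lemma sv_props:
  fixes A :: "real^'n^'n"
  shows "finite (singular_values A)" "singular_values A \<noteq> {}" "\<And>s. s \<in> singular_values A \<Longrightarrow> s \<ge> 0"
proof -
  let ?S = "transpose A ** A"
  show "finite (singular_values A)" unfolding singular_values_def
    using eig_finite[OF ata_props(1)] by (intro finite_imageI)
  obtain u c where "u \<noteq> 0" "?S *v u = c *\<^sub>R u" using max_eigen[OF ata_props(1)[of A]] by blast
  hence "c \<in> real_eigenvalues ?S" unfolding real_eigenvalues_def by auto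
  thus "singular_values A \<noteq> {}" unfolding singular_values_def by auto
  show "\<And>s. s \<in> singular_values A \<Longrightarrow> s \<ge> 0" unfolding singular_values_def
    using eig_nonneg by auto
qed

lemma sigma_max_bound:
  fixes A :: "real^'n^'n"
  shows "norm (A *v v) \<le> sigma_max A * norm v"
proof -
  let ?S = "transpose A ** A"
  obtain u c where uc: "u \<noteq> 0" "?S *v u = c *\<^sub>R u" "\<forall>v. v \<bullet> (?S *v v) \<le> c * (v \<bullet> v)"
    using max_eigen[OF ata_props(1)[of A]] by blast
  hence "c \<in> real_eigenvalues ?S" unfolding real_eigenvalues_def by auto
  hence cs: "sqrt c \<le> sigma_max A" unfolding sigma_max_def
    using sv_props(1)[where A=A] unfolding singular_values_def by (simp add: Max_ge)
  have "(norm (A *v v))^2 \<le> c * (norm v)^2"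
    using uc(3)[rule_format, of v] ata_props(2)[of v A] by (simp add: power2_norm_eq_inner)
  hence "norm (A *v v) \<le> sqrt (c * (norm v)^2)" by (simp add: real_le_rsqrt)
  also have "\<dots> = sqrt c * norm v" by (simp add: real_sqrt_mult)
  also have "\<dots> \<le> sigma_max A * norm v" using cs by (simp add: mult_right_mono)
  finally show ?thesis .
qed

lemma sigma_min_bound:
  fixes A :: "real^'n^'n"
  shows "sigma_min A * norm v \<le> norm (A *v v)" and "sigma_min A \<ge> 0"
proof -
  let ?S = "transpose A ** A"
  have symn: "transpose (- ?S) = - ?S" using ata_props(1)[of A]
    by (simp add: transpose_def vec_eq_iff)
  have negv: "(- ?S) *v w = - (?S *v w)" for w
    by (simp add: vec_eq_iff matrix_vector_mult_def sum_negf)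
  obtain u c where uc: "u \<noteq> 0" "(- ?S) *v u = c *\<^sub>R u" "\<forall>v. v \<bullet> ((- ?S) *v v) \<le> c * (v \<bullet> v)"
    using max_eigen[OF symn] by blast
  have "?S *v u = (- c) *\<^sub>R u" using uc(2) negv[of u] by (metis minus_minus scaleR_minus_left)
  hence "- c \<in> real_eigenvalues ?S" unfolding real_eigenvalues_def using uc(1) by auto
  hence cs: "sigma_min A \<le> sqrt (- c)" unfolding sigma_min_def
    using sv_props(1)[where A=A] unfolding singular_values_def by (simp add: Min_le)
  show "sigma_min A \<ge> 0" unfolding sigma_min_def using sv_props[where A=A] Min_in by blast
  have "(- c) * (norm v)^2 \<le> (norm (A *v v))^2"
    using uc(3)[rule_format, of v] ata_props(2)[of v A] negv[of v] by (simp add: power2_norm_eq_inner)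
  hence "sqrt ((- c) * (norm v)^2) \<le> norm (A *v v)" by (simp add: real_sqrt_le_iff real_le_lsqrt)
  moreover have "sqrt ((- c) * (norm v)^2) = sqrt (- c) * norm v" by (simp only: real_sqrt_mult real_sqrt_abs abs_norm_cancel)
  ultimately show "sigma_min A * norm v \<le> norm (A *v v)"
    using cs by (smt (verit) mult_right_mono norm_ge_zero)
qed

lemma pointwise:
  fixes W M Mh :: "real^'n^'n" and x y :: "real^'n"
  assumes y: "y = (W \<odot> M) *v x"
    and inv: "invertible (W \<odot> Mh)"
  shows "sigma_min (W \<odot> (Mh - M)) / sigma_max (W \<odot> Mh) * norm x
         \<le> norm (x - matrix_inv (W \<odot> Mh) *v y)"
proof -
  define A where "A = W \<odot> Mh"
  define B where "B = W \<odot> (Mh - M)"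
  define Ai where "Ai = matrix_inv A"
  have AAi: "A ** Ai = mat 1 \<and> Ai ** A = mat 1"
    using inv unfolding A_def Ai_def invertible_def matrix_inv_def by (rule someI_ex)
  have BA: "B = A - W \<odot> M" unfolding A_def B_def hadamard_def
    by (simp add: vec_eq_iff algebra_simps)
  have eq: "x - Ai *v y = Ai *v (B *v x)"
  proof -
    have "Ai *v (B *v x) = Ai *v (A *v x) - Ai *v y"
      unfolding BA y by (simp add: matrix_vector_mult_diff_rdistrib matrix_vector_mult_diff_distrib)
    also have "Ai *v (A *v x) = x" using AAi by (simp add: matrix_vector_mul_assoc)
    finally show ?thesis by simp
  qed
  define N where "N = norm (x - Ai *v y)"
  have "norm (B *v x) = norm (A *v (Ai *v (B *v x)))"
    using AAi by (simp add: matrix_vector_mul_assoc matrix_mul_assoc)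
  also have "\<dots> \<le> sigma_max A * N" unfolding N_def eq by (rule sigma_max_bound)
  finally have b1: "norm (B *v x) \<le> sigma_max A * N" .
  have b2: "sigma_min B * norm x \<le> norm (B *v x)" by (rule sigma_min_bound)
  have smax0: "sigma_max A \<ge> 0" unfolding sigma_max_def using sv_props[where A=A] Max_in by blast
  have N0: "N \<ge> 0" unfolding N_def by simp
  show ?thesis
  proof (cases "sigma_max A = 0")
    case True
    thus ?thesis using N0 unfolding A_def Ai_def N_def by simp
  next
    case False
    hence pos: "sigma_max A > 0" using smax0 by simp
    have "sigma_min B * norm x \<le> sigma_max A * N" using b1 b2 by simp
    hence "sigma_min B / sigma_max A * norm x \<le> N" using pos
      by (simp add: field_simps mult.commute)
    thus ?thesis unfolding A_def B_def Ai_def N_def .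
  qed
qed

theorem theorem1:
  fixes W M :: "real^'n^'n" and x y :: "real^'n" and P :: "(real^'n^'n) pmf"
  assumes "binary_mask M"
    and "y = (W \<odot> M) *v x"
    and "\<forall>Mh\<in>set_pmf P. binary_mask Mh"
    and "\<forall>Mh\<in>set_pmf P. invertible (W \<odot> Mh)"
  shows "measure_pmf.expectation P (\<lambda>Mh. norm (x - matrix_inv (W \<odot> Mh) *v y))
         \<ge> (\<Sum>Mh\<in>set_pmf P. pmf P Mh *
               (sigma_min (W \<odot> (Mh - M)) / sigma_max (W \<odot> Mh)) * norm x)"
proof (cases "finite (set_pmf P)")
  case True
  have "measure_pmf.expectation P (\<lambda>Mh. norm (x - matrix_inv (W \<odot> Mh) *v y))
      = (\<Sum>Mh\<in>set_pmf P. norm (x - matrix_inv (W \<odot> Mh) *v y) * pmf P Mh)"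
    using True by (rule integral_measure_pmf_real) simp
  also have "\<dots> \<ge> (\<Sum>Mh\<in>set_pmf P. pmf P Mh *
               (sigma_min (W \<odot> (Mh - M)) / sigma_max (W \<odot> Mh)) * norm x)"
  proof (rule sum_mono)
    fix Mh assume "Mh \<in> set_pmf P"
    hence "sigma_min (W \<odot> (Mh - M)) / sigma_max (W \<odot> Mh) * norm x
         \<le> norm (x - matrix_inv (W \<odot> Mh) *v y)"
      using assms(2,4) pointwise by blast
    hence "pmf P Mh * (sigma_min (W \<odot> (Mh - M)) / sigma_max (W \<odot> Mh) * norm x)
         \<le> pmf P Mh * norm (x - matrix_inv (W \<odot> Mh) *v y)"
      by (rule mult_left_mono) simp
    thus "pmf P Mh * (sigma_min (W \<odot> (Mh - M)) / sigma_max (W \<odot> Mh)) * norm x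
         \<le> norm (x - matrix_inv (W \<odot> Mh) *v y) * pmf P Mh"
      by (simp add: mult.commute mult.left_commute mult.assoc)
  qed
  finally show ?thesis .
next
  case False
  have "0 \<le> measure_pmf.expectation P (\<lambda>Mh. norm (x - matrix_inv (W \<odot> Mh) *v y))"
    by (intro integral_nonneg_AE) simp
  thus ?thesis using False by simp
qed

end
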